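(* Let $\Lambda$ be a random variable with support in $[0,1]$ and $p=E[\Lambda]\in(0,1)$. Let $\boldsymbol{I}$ be a $d$-variate Bernoulli vector with pmf $f_{\boldsymbol{I}}(\boldsymbol{i})=\int_0^1\lambda^{i_\bullet}(1-\lambda)^{d-i_\bullet}\,dF_\Lambda(\lambda)$, $\boldsymbol{i}\in\{0,1\}^d$, where $i_\bullet=i_1+\dots+i_d$. Let $U_m=U_{0,m}^{1-p}U_{1,m}^{I_m}$, $m=1,\dots,d$, with $\boldsymbol{U}_0,\boldsymbol{U}_1$ vectors of independent standard uniform random variables and $\boldsymbol{I},\boldsymbol{U}_0,\boldsymbol{U}_1$ mutually independent. Then the copula of $\boldsymbol{U}$ is $$C(\boldsymbol{u})=E\left[\prod_{m=1}^d\left(u_m^{(1-p)^{-1}}-\frac{\Lambda}{p}\left\{u_m^{(1-p)^{-1}}-u_m\right\}\right)\right],\qquad\boldsymbol{u}\in[0,1]^d,$$ and, for $\boldsymbol{u}\in(0,1]^d$, $$C(\boldsymbol{u})=\prod_{m=1}^d u_m^{(1-p)^{-1}}\left(1+\sum_{k=1}^d(-1)^k\sum_{1\le j_1<\dots<j_k\le d}\frac{E[\Lambda^k]}{p^k}\prod_{n=1}^k\left(1-u_{j_n}^{-\frac{p}{1-p}}\right)\right).$$ *)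

theory Defs
  imports "HOL-Probability.Probability"
begin

definition is_copula :: "nat \<Rightarrow> ((nat \<Rightarrow> real) \<Rightarrow> real) \<Rightarrow> bool" where
  "is_copula d C \<longleftrightarrow>
     (\<exists>N :: (nat \<Rightarrow> real) measure.
        prob_space N \<and> sets N = sets (PiM {..<d} (\<lambda>_. borel)) \<and>
        (\<forall>m<d. distr N borel (\<lambda>v. v m) = uniform_measure lborel {0..1}) \<and>
        (\<forall>u \<in> PiE {..<d} (\<lambda>_. {0..1}).
            C u = measure N {v \<in> space N. \<forall>m<d. v m \<le> u m}))"

definition is_copula_of ::
    "'a measure \<Rightarrow> nat \<Rightarrow> ('a \<Rightarrow> nat \<Rightarrow> real) \<Rightarrow> ((nat \<Rightarrow> real) \<Rightarrow> real) \<Rightarrow> bool" where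
  "is_copula_of M d X C \<longleftrightarrow>
     is_copula d C \<and>
     (\<forall>x :: nat \<Rightarrow> real.
        measure M {\<omega> \<in> space M. \<forall>m<d. X \<omega> m \<le> x m} =
        C (restrict (\<lambda>m. measure M {\<omega> \<in> space M. X \<omega> m \<le> x m}) {..<d}))"

end

theory Submission
  imports Defs
begin


abbreviation Unif :: "real measure" where "Unif \<equiv> uniform_measure lborel {0..1::real}"

lemma Unif_prob: "prob_space Unif"
  by (rule prob_space_uniform_measure) auto

lemma sets_Unif[simp, measurable_cong]: "sets Unif = sets borel" by simp
lemma space_Unif[simp]: "space Unif = UNIV" by simp

lemma emeasure_Unif: "A \<in> sets borel \<Longrightarrow> emeasure Unif A = emeasure lborel ({0..1} \<inter> A)"
  by (subst emeasure_uniform_measure) (auto simp: divide_ennreal_def)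

lemma powr_le_iff_le_root:
  fixes a t u :: real
  assumes "0 < a" "0 \<le> t" "0 \<le> u"
  shows "t powr a \<le> u \<longleftrightarrow> t \<le> u powr (1/a)"
proof
  assume "t powr a \<le> u"
  then have "(t powr a) powr (1/a) \<le> u powr (1/a)"
    using assms by (intro powr_mono2) auto
  then show "t \<le> u powr (1/a)" using assms by (simp add: powr_powr)
next
  assume "t \<le> u powr (1/a)"
  then have "t powr a \<le> (u powr (1/a)) powr a"
    using assms by (intro powr_mono2) auto
  then show "t powr a \<le> u" using assms by (simp add: powr_powr)
qed

lemma h0_eq:
  fixes a u t :: real
  assumes "0 \<le> u"
  shows "emeasure Unif {y. t powr a * y powr 0 \<le> u} = (if t powr a \<le> u then 1 else 0)"
proof -
  have m: "{y. t powr a * y powr 0 \<le> u} \<in> sets borel" by measurable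
  show ?thesis
  proof (cases "t powr a \<le> u")
    case True
    then have "{0..1} \<inter> {y. t powr a * y powr 0 \<le> u} = {0..1}"
      using assms by (auto simp: powr_zero_eq_one)
    then show ?thesis using True by (simp add: emeasure_Unif[OF m])
  next
    case False
    then have "{0..1} \<inter> {y. t powr a * y powr 0 \<le> u} = {0}"
      using assms by (auto simp: powr_zero_eq_one)
    then show ?thesis using False by (simp add: emeasure_Unif[OF m])
  qed
qed

lemma h1_eq:
  fixes a u t :: real
  assumes "0 \<le> u" "0 \<le> t" "t \<le> 1"
  shows "emeasure Unif {y. t powr a * y powr 1 \<le> u} = (if t powr a \<le> u then 1 else ennreal (u / t powr a))"
proof -
  have m: "{y. t powr a * y powr 1 \<le> u} \<in> sets borel" by measurable
  show ?thesis
  proof (cases "t powr a \<le> u")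
    case True
    have "{0..1} \<inter> {y. t powr a * y powr 1 \<le> u} = {0..1}"
    proof (intro equalityI subsetI)
      fix y :: real assume "y \<in> {0..1::real}"
      then have y: "0 \<le> y" "y \<le> 1" by auto
      have "t powr a * y \<le> t powr a * 1" using y by (intro mult_left_mono) auto
      then show "y \<in> {0..1} \<inter> {y. t powr a * y powr 1 \<le> u}" using True y by simp
    qed auto
    then show ?thesis using True by (simp add: emeasure_Unif[OF m])
  next
    case False
    then have tp: "t powr a > 0" using assms by linarith
    have le1: "u / t powr a \<le> 1" using False tp by simp
    have "{0..1} \<inter> {y. t powr a * y powr 1 \<le> u} = {0..u / t powr a}"
    proof (intro equalityI subsetI)
      fix y :: real assume "y \<in> {0..1} \<inter> {y. t powr a * y powr 1 \<le> u}"
      then show "y \<in> {0..u / t powr a}" using tp by (auto simp: field_simps)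
    next
      fix y :: real assume yy: "y \<in> {0..u / t powr a}"
      then have y1: "y \<le> 1" "0 \<le> y" using le1 by auto
      have "t powr a * y \<le> u" using yy tp by (auto simp: field_simps)
      with y1 show "y \<in> {0..1} \<inter> {y. t powr a * y powr 1 \<le> u}" by simp
    qed
    then show ?thesis using False tp assms by (simp add: emeasure_Unif[OF m] divide_ennreal_def)
  qed
qed


lemma emeasure_lborel_01: "emeasure lborel {0..1::real} = 1" by simp

lemma root_le_self:
  fixes a u :: real
  assumes "0 < a" "a < 1" "0 \<le> u" "u \<le> 1"
  shows "u powr (1/a) \<le> u" "u powr (1/a) \<le> 1" "0 \<le> u powr (1/a)"
proof -
  show "u powr (1/a) \<le> u"
  proof (cases "u = 0")
    case False
    have "u powr (1/a) \<le> u powr 1"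
      using assms False by (intro powr_mono') (auto simp: field_simps)
    then show ?thesis using assms by simp
  qed simp
  then show "u powr (1/a) \<le> 1" using assms by simp
qed simp

lemma int0:
  fixes a u :: real
  assumes "0 < a" "a < 1" "0 \<le> u" "u \<le> 1"
  shows "(\<integral>\<^sup>+ t. (if t powr a \<le> u then 1 else 0) \<partial>Unif) = ennreal (u powr (1/a))"
proof -
  have "(\<integral>\<^sup>+ t. (if t powr a \<le> u then 1 else 0) \<partial>Unif)
      = (\<integral>\<^sup>+ t. (if t powr a \<le> u then 1 else 0) * indicator {0..1} t \<partial>lborel)"
    by (subst nn_integral_uniform_measure) (auto simp: divide_ennreal_def)
  also have "\<dots> = (\<integral>\<^sup>+ t. indicator {0..u powr (1/a)} t \<partial>lborel)"
    by (intro nn_integral_cong)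
      (use root_le_self[OF assms] powr_le_iff_le_root[OF assms(1) _ assms(3)] in \<open>auto split: split_indicator\<close>)
  also have "\<dots> = ennreal (u powr (1/a))"
    using root_le_self[OF assms] by simp
  finally show ?thesis .
qed

lemma int1:
  fixes a u :: real
  assumes a: "0 < a" "a < 1" and u: "0 \<le> u" "u \<le> 1"
  shows "(\<integral>\<^sup>+ t. (if t powr a \<le> u then 1 else ennreal (u / t powr a)) * indicator {0..1} t \<partial>lborel)
         = ennreal ((u - a * u powr (1/a)) / (1 - a))"
proof (cases "u = 0")
  case True
  have "(\<integral>\<^sup>+ t. (if t powr a \<le> u then 1 else ennreal (u / t powr a)) * indicator {0..1} t \<partial>lborel)
      = (\<integral>\<^sup>+ t. indicator {0::real} t \<partial>lborel)"
    by (intro nn_integral_cong) (use True a in \<open>auto split: split_indicator\<close>)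
  also have "\<dots> = 0" by simp
  finally show ?thesis using True by simp
next
  case False
  then have u0: "0 < u" using u by simp
  define c where "c = u powr (1/a)"
  have c: "0 < c" "c \<le> 1" "c \<le> u" using root_le_self[OF a u] u0 by (auto simp: c_def)
  have ca: "c powr a = u" using a u0 by (simp add: c_def powr_powr)
  have ca': "c powr (1 - a) = c / u"
    using a c ca by (simp add: powr_diff)
  have "(\<integral>\<^sup>+ t. (if t powr a \<le> u then 1 else ennreal (u / t powr a)) * indicator {0..1} t \<partial>lborel)
      = (\<integral>\<^sup>+ t. indicator {0..<c} t + ennreal (u * t powr (-a)) * indicator {c..1} t \<partial>lborel)"
  proof (intro nn_integral_cong)
    fix t :: real
    consider "t < 0" | "0 \<le> t" "t < c" | "t = c" | "c < t" "t \<le> 1" | "1 < t" by fastforce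
    then show "(if t powr a \<le> u then 1 else ennreal (u / t powr a)) * indicator {0..1} t
        = indicator {0..<c} t + ennreal (u * t powr (-a)) * indicator {c..1} t"
    proof cases
      case 2
      then have "t powr a \<le> u" using powr_le_iff_le_root[OF a(1) _ u(1), of t] c by (simp add: c_def)
      then show ?thesis using 2 c by (auto split: split_indicator)
    next
      case 3
      then show ?thesis using c ca a by (auto split: split_indicator simp: powr_minus_divide)
    next
      case 4
      then have t0: "0 \<le> t" using c by simp
      have "\<not> t powr a \<le> u" using powr_le_iff_le_root[OF a(1) t0 u(1)] 4 by (simp add: c_def)
      then show ?thesis using 4 c by (auto split: split_indicator simp: powr_minus_divide)
    qed (use c in \<open>auto split: split_indicator\<close>)
  qed
  also have "\<dots> = (\<integral>\<^sup>+ t. indicator {0..<c} t \<partial>lborel) + (\<integral>\<^sup>+ t. ennreal (u * t powr (-a)) * indicator {c..1} t \<partial>lborel)"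
    by (intro nn_integral_add) auto
  also have "(\<integral>\<^sup>+ t. indicator {0..<c} t \<partial>lborel) = ennreal c" using c by simp
  also have "(\<integral>\<^sup>+ t. ennreal (u * t powr (-a)) * indicator {c..1} t \<partial>lborel)
      = ennreal ((\<lambda>t. u * t powr (1 - a) / (1 - a)) 1 - (\<lambda>t. u * t powr (1 - a) / (1 - a)) c)"
  proof (rule nn_integral_FTC_Icc)
    fix t assume t: "t \<in> {c..1}"
    then have "t > 0" using c by auto
    then have "((\<lambda>t. u * t powr (1 - a) / (1 - a)) has_real_derivative u * ((1 - a) * t powr (1 - a - 1)) / (1 - a)) (at t)"
      by (auto intro!: derivative_eq_intros)
    moreover have "u * ((1 - a) * t powr (1 - a - 1)) / (1 - a) = u * t powr (-a)"
      using a by simp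
    ultimately show "((\<lambda>t. u * t powr (1 - a) / (1 - a)) has_real_derivative u * t powr (-a)) (at t)"
      by simp
    show "0 \<le> u * t powr (-a)" using u by simp
  qed (use c in auto)
  also have "ennreal c + ennreal ((\<lambda>t. u * t powr (1 - a) / (1 - a)) 1 - (\<lambda>t. u * t powr (1 - a) / (1 - a)) c)
      = ennreal ((u - a * c) / (1 - a))"
  proof -
    have e: "(\<lambda>t. u * t powr (1 - a) / (1 - a)) 1 - (\<lambda>t. u * t powr (1 - a) / (1 - a)) c = (u - c) / (1 - a)"
    proof -
      have "u * c powr (1 - a) = c" using ca' u0 by simp
      then show ?thesis by (simp add: diff_divide_distrib)
    qed
    have "0 \<le> (u - c) / (1 - a)" using c a by simp
    moreover have "c + (u - c) / (1 - a) = (u - a * c) / (1 - a)"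
      using a by (simp add: field_simps)
    ultimately show ?thesis unfolding e using c
      by (subst ennreal_plus[symmetric]) auto
  qed
  finally show ?thesis by (simp add: c_def)
qed


definition gg :: "real \<Rightarrow> nat \<Rightarrow> real \<Rightarrow> real" where
  "gg a e u = (if e = 0 then u powr (1/a) else (u - a * u powr (1/a)) / (1 - a))"

lemma h_int:
  fixes a u :: real
  assumes a: "0 < a" "a < 1" and u: "0 \<le> u" "u \<le> 1" and e: "e \<in> {0, 1::nat}"
  shows "(\<integral>\<^sup>+ t. emeasure Unif {y. t powr a * y powr real e \<le> u} \<partial>Unif) = ennreal (gg a e u)"
proof (cases "e = 0")
  case True
  have "(\<integral>\<^sup>+ t. emeasure Unif {y. t powr a * y powr real e \<le> u} \<partial>Unif)
      = (\<integral>\<^sup>+ t. (if t powr a \<le> u then 1 else 0) \<partial>Unif)"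
    by (intro nn_integral_cong) (use True h0_eq[OF u(1)] in simp)
  also have "\<dots> = ennreal (gg a e u)" using int0[OF a u] True by (simp add: gg_def)
  finally show ?thesis .
next
  case False
  then have e1: "e = 1" using e by simp
  have m: "(\<lambda>t. emeasure Unif {y. t powr a * y powr real e \<le> u}) \<in> borel_measurable borel"
  proof -
    interpret U: prob_space Unif by (rule Unif_prob)
    have "{(t, y). t powr a * y powr real e \<le> u} = {ty \<in> space (borel \<Otimes>\<^sub>M Unif). fst ty powr a * snd ty powr real e \<le> u}"
      by (auto simp: space_pair_measure)
    also have "\<dots> \<in> sets (borel \<Otimes>\<^sub>M Unif)"
      by measurable
    finally have "{(t, y). t powr a * y powr real e \<le> u} \<in> sets (borel \<Otimes>\<^sub>M Unif)" .
    from U.measurable_emeasure_Pair[OF this] show ?thesis by (simp add: vimage_def)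
  qed
  have "(\<integral>\<^sup>+ t. emeasure Unif {y. t powr a * y powr real e \<le> u} \<partial>Unif)
      = (\<integral>\<^sup>+ t. emeasure Unif {y. t powr a * y powr real e \<le> u} * indicator {0..1} t \<partial>lborel)"
    using m by (subst nn_integral_uniform_measure) (auto simp: divide_ennreal_def)
  also have "\<dots> = (\<integral>\<^sup>+ t. (if t powr a \<le> u then 1 else ennreal (u / t powr a)) * indicator {0..1} t \<partial>lborel)"
    by (intro nn_integral_cong) (use e1 h1_eq[OF u(1)] in \<open>auto split: split_indicator\<close>)
  also have "\<dots> = ennreal (gg a e u)" using int1[OF a u] e1 by (simp add: gg_def)
  finally show ?thesis .
qed



lemma G:
  fixes a :: real and u :: "nat \<Rightarrow> real" and e :: "nat \<Rightarrow> nat"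
  assumes a: "0 < a" "a < 1" and u: "\<And>m. m < d \<Longrightarrow> u m \<in> {0..1}" and e: "\<And>m. m < d \<Longrightarrow> e m \<in> {0, 1}"
  shows "emeasure (PiM {..<d} (\<lambda>_. Unif) \<Otimes>\<^sub>M PiM {..<d} (\<lambda>_. Unif))
           {xy \<in> space (PiM {..<d} (\<lambda>_. Unif) \<Otimes>\<^sub>M PiM {..<d} (\<lambda>_. Unif)).
              \<forall>m<d. fst xy m powr a * snd xy m powr real (e m) \<le> u m}
         = (\<Prod>m<d. ennreal (gg a (e m) (u m)))"
proof -
  interpret P: product_prob_space "\<lambda>_. Unif" by (rule product_prob_spaceI) (rule Unif_prob)
  interpret PU: prob_space "PiM {..<d} (\<lambda>_. Unif)" by (rule prob_space_PiM) (rule Unif_prob)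
  interpret UU: prob_space Unif by (rule Unif_prob)
  let ?PU = "PiM {..<d} (\<lambda>_. Unif)"
  let ?Q = "{xy \<in> space (?PU \<Otimes>\<^sub>M ?PU). \<forall>m<d. fst xy m powr a * snd xy m powr real (e m) \<le> u m}"
  have Q: "?Q \<in> sets (?PU \<Otimes>\<^sub>M ?PU)" by measurable
  have sec: "Pair x -` ?Q = PiE {..<d} (\<lambda>m. {y. x m powr a * y powr real (e m) \<le> u m})"
    if "x \<in> space ?PU" for x
  proof (intro set_eqI iffI)
    fix y assume "y \<in> Pair x -` ?Q"
    then show "y \<in> PiE {..<d} (\<lambda>m. {y. x m powr a * y powr real (e m) \<le> u m})"
      by (simp add: space_pair_measure space_PiM PiE_iff)
  next
    fix y assume "y \<in> PiE {..<d} (\<lambda>m. {y. x m powr a * y powr real (e m) \<le> u m})"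
    then show "y \<in> Pair x -` ?Q" using that
      by (simp add: space_pair_measure space_PiM PiE_iff)
  qed
  have "emeasure (?PU \<Otimes>\<^sub>M ?PU) ?Q = (\<integral>\<^sup>+x. emeasure ?PU (Pair x -` ?Q) \<partial>?PU)"
    by (rule PU.emeasure_pair_measure_alt[OF Q])
  also have "\<dots> = (\<integral>\<^sup>+x. (\<Prod>m<d. emeasure Unif {y. x m powr a * y powr real (e m) \<le> u m}) \<partial>?PU)"
  proof (intro nn_integral_cong)
    fix x assume x: "x \<in> space ?PU"
    show "emeasure ?PU (Pair x -` ?Q) = (\<Prod>m<d. emeasure Unif {y. x m powr a * y powr real (e m) \<le> u m})"
      unfolding sec[OF x] by (rule P.emeasure_PiM) auto
  qed
  also have "\<dots> = (\<Prod>m<d. \<integral>\<^sup>+t. emeasure Unif {y. t powr a * y powr real (e m) \<le> u m} \<partial>Unif)"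
  proof (rule P.product_nn_integral_prod)
    fix m
    have "{(t, y). t powr a * y powr real (e m) \<le> u m} = {ty \<in> space (Unif \<Otimes>\<^sub>M Unif). fst ty powr a * snd ty powr real (e m) \<le> u m}"
      by (auto simp: space_pair_measure)
    also have "\<dots> \<in> sets (Unif \<Otimes>\<^sub>M Unif)"
      by measurable
    finally have "{(t, y). t powr a * y powr real (e m) \<le> u m} \<in> sets (Unif \<Otimes>\<^sub>M Unif)" .
    from sigma_finite_measure.measurable_emeasure_Pair[OF prob_space_imp_sigma_finite[OF Unif_prob] this]
    show "(\<lambda>t. emeasure Unif {y. t powr a * y powr real (e m) \<le> u m}) \<in> borel_measurable Unif"
      by (simp add: vimage_def)
  qed simp
  also have "\<dots> = (\<Prod>m<d. ennreal (gg a (e m) (u m)))"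
    by (intro prod.cong refl h_int[OF a]) (use u e in auto)
  finally show ?thesis .
qed



locale cop = prob_space M for M :: "'a measure" +
  fixes d :: nat and Lam :: "'a \<Rightarrow> real" and I U0 U1 :: "'a \<Rightarrow> nat \<Rightarrow> real" and p :: real
  assumes Lam_meas[measurable]: "Lam \<in> borel_measurable M"
  and Lam_AE: "AE \<omega> in M. Lam \<omega> \<in> {0..1}"
  and p_def: "p = expectation Lam"
  and p0: "0 < p" and p1: "p < 1"
  and I_meas[measurable]: "I \<in> M \<rightarrow>\<^sub>M PiM {..<d} (\<lambda>_. borel)"
  and U0_meas[measurable]: "U0 \<in> M \<rightarrow>\<^sub>M PiM {..<d} (\<lambda>_. borel)"
  and U1_meas[measurable]: "U1 \<in> M \<rightarrow>\<^sub>M PiM {..<d} (\<lambda>_. borel)"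
  and pmf_I: "\<And>i. i \<in> PiE {..<d} (\<lambda>_. {0::nat, 1}) \<Longrightarrow>
        measure M {\<omega> \<in> space M. \<forall>m<d. I \<omega> m = real (i m)} =
        expectation (\<lambda>\<omega>. Lam \<omega> ^ (\<Sum>m<d. i m) * (1 - Lam \<omega>) ^ (d - (\<Sum>m<d. i m)))"
  and indU0: "indep_vars (\<lambda>_. borel) (\<lambda>m \<omega>. U0 \<omega> m) {..<d}"
  and indU1: "indep_vars (\<lambda>_. borel) (\<lambda>m \<omega>. U1 \<omega> m) {..<d}"
  and distU0: "\<And>m. m < d \<Longrightarrow> distr M borel (\<lambda>\<omega>. U0 \<omega> m) = uniform_measure lborel {0..1}"
  and distU1: "\<And>m. m < d \<Longrightarrow> distr M borel (\<lambda>\<omega>. U1 \<omega> m) = uniform_measure lborel {0..1}"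
  and ind3: "indep_vars (\<lambda>_. PiM {..<d} (\<lambda>_. borel)) (\<lambda>k. [I, U0, U1] ! k) {0, 1, 2}"
begin

abbreviation "PB \<equiv> PiM {..<d} (\<lambda>_. borel :: real measure)"
abbreviation "PU \<equiv> PiM {..<d} (\<lambda>_. Unif)"

lemma indep_I_pair:
  "indep_var (PiM {0} (\<lambda>_. PB)) (\<lambda>\<omega>. restrict (\<lambda>k. ([I,U0,U1]!k) \<omega>) {0})
             (PiM {1,2} (\<lambda>_. PB)) (\<lambda>\<omega>. restrict (\<lambda>k. ([I,U0,U1]!k) \<omega>) {1,2})"
  by (rule indep_var_restrict[OF ind3]) auto

lemma prob_I_pair:
  assumes S: "S \<in> sets PB" and T: "T \<in> sets (PB \<Otimes>\<^sub>M PB)"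
  shows "prob {\<omega> \<in> space M. I \<omega> \<in> S \<and> (U0 \<omega>, U1 \<omega>) \<in> T}
       = prob {\<omega> \<in> space M. I \<omega> \<in> S} * prob {\<omega> \<in> space M. (U0 \<omega>, U1 \<omega>) \<in> T}"
proof -
  let ?R0 = "\<lambda>\<omega>. restrict (\<lambda>k. ([I,U0,U1]!k) \<omega>) {0::nat}"
  let ?R12 = "\<lambda>\<omega>. restrict (\<lambda>k. ([I,U0,U1]!k) \<omega>) {1::nat,2}"
  let ?Xa = "{f \<in> space (PiM {0::nat} (\<lambda>_. PB)). f 0 \<in> S}"
  let ?Xb = "{f \<in> space (PiM {1::nat,2} (\<lambda>_. PB)). (f 1, f 2) \<in> T}"
  have Xa: "?Xa \<in> sets (PiM {0::nat} (\<lambda>_. PB))"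
  proof -
    have "(\<lambda>f. f 0) \<in> PiM {0::nat} (\<lambda>_. PB) \<rightarrow>\<^sub>M PB" by (rule measurable_component_singleton) auto
    from measurable_sets[OF this S] show ?thesis by (simp add: vimage_def Int_def conj_commute)
  qed
  have Xb: "?Xb \<in> sets (PiM {1::nat,2} (\<lambda>_. PB))"
  proof -
    have "(\<lambda>f. (f 1, f 2)) \<in> PiM {1::nat,2} (\<lambda>_. PB) \<rightarrow>\<^sub>M PB \<Otimes>\<^sub>M PB"
      by (auto intro!: measurable_Pair measurable_component_singleton)
    from measurable_sets[OF this T] show ?thesis by (simp add: vimage_def Int_def conj_commute)
  qed
  have sp: "\<And>\<omega>. \<omega> \<in> space M \<Longrightarrow> I \<omega> \<in> space PB \<and> U0 \<omega> \<in> space PB \<and> U1 \<omega> \<in> space PB"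
    using measurable_space[OF I_meas] measurable_space[OF U0_meas] measurable_space[OF U1_meas] by auto
  have "prob ((\<lambda>x. (?R0 x, ?R12 x)) -` (?Xa \<times> ?Xb) \<inter> space M) = prob (?R0 -` ?Xa \<inter> space M) * prob (?R12 -` ?Xb \<inter> space M)"
    by (rule indep_varD[OF indep_I_pair Xa Xb])
  moreover have "(\<lambda>x. (?R0 x, ?R12 x)) -` (?Xa \<times> ?Xb) \<inter> space M = {\<omega> \<in> space M. I \<omega> \<in> S \<and> (U0 \<omega>, U1 \<omega>) \<in> T}"
    using sp by (auto simp: space_PiM)
  moreover have "?R0 -` ?Xa \<inter> space M = {\<omega> \<in> space M. I \<omega> \<in> S}"
    using sp by (auto simp: space_PiM)
  moreover have "?R12 -` ?Xb \<inter> space M = {\<omega> \<in> space M. (U0 \<omega>, U1 \<omega>) \<in> T}"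
    using sp by (auto simp: space_PiM)
  ultimately show ?thesis by simp
qed

lemma indep_U0_U1: "indep_var PB U0 PB U1"
proof -
  have r: "indep_var (PiM {1} (\<lambda>_. PB)) (\<lambda>\<omega>. restrict (\<lambda>k. ([I,U0,U1]!k) \<omega>) {1})
                     (PiM {2} (\<lambda>_. PB)) (\<lambda>\<omega>. restrict (\<lambda>k. ([I,U0,U1]!k) \<omega>) {2})"
    by (rule indep_var_restrict[OF ind3]) auto
  have c: "indep_var PB ((\<lambda>f. f 1) \<circ> (\<lambda>\<omega>. restrict (\<lambda>k. ([I,U0,U1]!k) \<omega>) {1}))
       PB ((\<lambda>f. f 2) \<circ> (\<lambda>\<omega>. restrict (\<lambda>k. ([I,U0,U1]!k) \<omega>) {2}))"
    by (rule indep_var_compose[OF r]) (auto intro!: measurable_component_singleton)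
  have e1: "(\<lambda>f. f 1) \<circ> (\<lambda>\<omega>. restrict (\<lambda>k. ([I,U0,U1]!k) \<omega>) {1}) = U0"
    by (simp add: fun_eq_iff)
  have e2: "(\<lambda>f. f 2) \<circ> (\<lambda>\<omega>. restrict (\<lambda>k. ([I,U0,U1]!k) \<omega>) {2}) = U1"
    by (simp add: fun_eq_iff)
  show ?thesis using c unfolding e1 e2 .
qed

lemma distr_vec:
  assumes d: "d \<noteq> 0" and V[measurable]: "V \<in> M \<rightarrow>\<^sub>M PB"
    and ind: "indep_vars (\<lambda>_. borel) (\<lambda>m \<omega>. V \<omega> m) {..<d}"
    and dist: "\<And>m. m < d \<Longrightarrow> distr M borel (\<lambda>\<omega>. V \<omega> m) = Unif"
  shows "distr M PB V = PU"
proof -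
  have rv: "\<And>m. m \<in> {..<d} \<Longrightarrow> random_variable borel (\<lambda>\<omega>. V \<omega> m)" by measurable
  have "distr M PB (\<lambda>x. \<lambda>m\<in>{..<d}. V x m) = (\<Pi>\<^sub>M m\<in>{..<d}. distr M borel (\<lambda>\<omega>. V \<omega> m))"
    using indep_vars_iff_distr_eq_PiM'[where I="{..<d}" and M'="\<lambda>_. borel" and X="\<lambda>m \<omega>. V \<omega> m", OF _ rv] d ind by auto
  also have "\<dots> = PU" by (intro PiM_cong) (auto simp: dist)
  also have "distr M PB (\<lambda>x. \<lambda>m\<in>{..<d}. V x m) = distr M PB V"
  proof (rule distr_cong)
    fix x assume "x \<in> space M"
    then have "V x \<in> space PB" using V by (auto simp: measurable_def)
    then show "(\<lambda>m\<in>{..<d}. V x m) = V x" by (auto simp: space_PiM PiE_def extensional_def fun_eq_iff)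
  qed auto
  finally show ?thesis .
qed

end


lemma sum_le_d: "\<forall>m<d. i m \<in> {0,1::nat} \<Longrightarrow> (\<Sum>m<d. i m) \<le> d"
proof -
  assume h: "\<forall>m<d. i m \<in> {0,1::nat}"
  have "(\<Sum>m<d. i m) \<le> (\<Sum>m<d. 1)" by (intro sum_mono) (use h in auto)
  then show ?thesis by simp
qed

lemma bern_prod:
  fixes L :: real
  shows "\<forall>m<d. i m \<in> {0,1::nat} \<Longrightarrow>
    L ^ (\<Sum>m<d. i m) * (1 - L) ^ (d - (\<Sum>m<d. i m)) = (\<Prod>m<d. if i m = 0 then 1 - L else L)"
proof (induction d)
  case 0
  then show ?case by simp
next
  case (Suc d)
  then have IH: "L ^ (\<Sum>m<d. i m) * (1 - L) ^ (d - (\<Sum>m<d. i m)) = (\<Prod>m<d. if i m = 0 then 1 - L else L)"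
    by auto
  have le: "(\<Sum>m<d. i m) \<le> d" using Suc.prems by (intro sum_le_d) auto
  have "i d \<in> {0,1}" using Suc.prems by auto
  then show ?case
  proof
    assume "i d = 0"
    then have "Suc d - (\<Sum>m<Suc d. i m) = Suc (d - (\<Sum>m<d. i m))" using le by simp
    then show ?thesis using \<open>i d = 0\<close> IH by (simp add: mult_ac)
  next
    assume "i d \<in> {1}"
    then have i1: "i d = 1" by simp
    then have "Suc d - (\<Sum>m<Suc d. i m) = d - (\<Sum>m<d. i m)" using le by simp
    then show ?thesis using i1 IH by (simp add: mult_ac)
  qed
qed

lemma sum_PiE01:
  fixes f :: "nat \<Rightarrow> nat \<Rightarrow> 'c::comm_semiring_1"
  shows "(\<Sum>i\<in>PiE {..<d} (\<lambda>_. {0::nat,1}). \<Prod>m<d. f m (i m)) = (\<Prod>m<d. f m 0 + f m 1)"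
  using prod_sum_PiE[of "{..<d}" "\<lambda>_. {0::nat,1}" f] by simp

lemma expand_prod:
  fixes L p :: real and y :: "nat \<Rightarrow> real"
  shows "(\<Prod>m<d. 1 - L / p * y m) =
     (\<Sum>k=0..d. (-1) ^ k * (L ^ k / p ^ k) * (\<Sum>J\<in>{J. J \<subseteq> {..<d} \<and> card J = k}. \<Prod>j\<in>J. y j))"
proof -
  have "(\<Prod>m<d. 1 - L / p * y m) = (\<Prod>m<d. (- (L / p * y m)) + 1)" by simp
  also have "\<dots> = (\<Sum>X\<in>Pow {..<d}. (\<Prod>m\<in>X. - (L / p * y m)) * (\<Prod>m\<in>{..<d}-X. 1))"
    by (rule prod_add) simp
  also have "\<dots> = (\<Sum>X\<in>Pow {..<d}. (-1) ^ card X * (L ^ card X / p ^ card X) * (\<Prod>j\<in>X. y j))"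
  proof (intro sum.cong refl)
    fix X assume "X \<in> Pow {..<d}"
    have "(\<Prod>m\<in>X. - (L / p * y m)) = (\<Prod>m\<in>X. (- (L / p)) * y m)" by simp
    also have "\<dots> = (- (L / p)) ^ card X * (\<Prod>m\<in>X. y m)" by (simp only: prod.distrib prod_constant)
    also have "\<dots> = (-1) ^ card X * (L ^ card X / p ^ card X) * (\<Prod>j\<in>X. y j)"
      by (subst power_minus) (simp add: power_divide)
    finally show "(\<Prod>m\<in>X. - (L / p * y m)) * (\<Prod>m\<in>{..<d}-X. 1) = (-1) ^ card X * (L ^ card X / p ^ card X) * (\<Prod>j\<in>X. y j)"
      by simp
  qed
  also have "\<dots> = (\<Sum>k=0..d. \<Sum>X\<in>{X \<in> Pow {..<d}. card X = k}. (-1) ^ card X * (L ^ card X / p ^ card X) * (\<Prod>j\<in>X. y j))"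
  proof (rule sum.group[symmetric])
    show "card ` Pow {..<d} \<subseteq> {0..d}"
    proof
      fix k assume "k \<in> card ` Pow {..<d}"
      then obtain X where "X \<subseteq> {..<d}" "k = card X" by auto
      then have "k \<le> card {..<d}" by (metis card_mono finite_lessThan)
      then show "k \<in> {0..d}" by simp
    qed
  qed (simp_all)
  also have "\<dots> = (\<Sum>k=0..d. (-1) ^ k * (L ^ k / p ^ k) * (\<Sum>J\<in>{J. J \<subseteq> {..<d} \<and> card J = k}. \<Prod>j\<in>J. y j))"
  proof (intro sum.cong refl)
    fix k
    have "(\<Sum>X\<in>{X \<in> Pow {..<d}. card X = k}. (-1) ^ card X * (L ^ card X / p ^ card X) * (\<Prod>j\<in>X. y j))
       = (\<Sum>X\<in>{J. J \<subseteq> {..<d} \<and> card J = k}. (-1) ^ k * (L ^ k / p ^ k) * (\<Prod>j\<in>X. y j))"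
      by (intro sum.cong) auto
    also have "\<dots> = (-1) ^ k * (L ^ k / p ^ k) * (\<Sum>J\<in>{J. J \<subseteq> {..<d} \<and> card J = k}. \<Prod>j\<in>J. y j)"
      by (simp add: sum_distrib_left)
    finally show "(\<Sum>X\<in>{X \<in> Pow {..<d}. card X = k}. (-1) ^ card X * (L ^ card X / p ^ card X) * (\<Prod>j\<in>X. y j))
       = (-1) ^ k * (L ^ k / p ^ k) * (\<Sum>J\<in>{J. J \<subseteq> {..<d} \<and> card J = k}. \<Prod>j\<in>J. y j)" .
  qed
  finally show ?thesis .
qed



lemma gg_nonneg:
  fixes a u :: real
  assumes "0 < a" "a < 1" "0 \<le> u" "u \<le> 1"
  shows "0 \<le> gg a e u"
proof -
  have "u powr (1/a) \<le> u" "0 \<le> u powr (1/a)" using root_le_self[OF assms] by auto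
  moreover have "a * u powr (1/a) \<le> u powr (1/a)" using assms \<open>0 \<le> u powr (1/a)\<close>
    by (simp add: mult_left_le_one_le)
  ultimately show ?thesis using assms by (auto simp: gg_def)
qed

context cop
begin

definition UU where "UU \<omega> m = U0 \<omega> m powr (1 - p) * U1 \<omega> m powr I \<omega> m"
definition EI where "EI i = {\<omega> \<in> space M. \<forall>m<d. I \<omega> m = real (i m)}"
definition cc where "cc L v = v powr (1/(1-p)) - L / p * (v powr (1/(1-p)) - v)"

lemma EI_sets[measurable]: "EI i \<in> events"
  unfolding EI_def by measurable

lemma comp_meas_gen:
  assumes X: "X \<in> M \<rightarrow>\<^sub>M PB"
  shows "(\<lambda>\<omega>. X \<omega> m) \<in> borel_measurable M"
proof (cases "m < d")
  case True
  then show ?thesis by (intro measurable_compose[OF X measurable_component_singleton]) auto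
next
  case False
  have u: "\<And>\<omega>. \<omega> \<in> space M \<Longrightarrow> X \<omega> m = undefined"
    using measurable_space[OF X] False by (auto simp: space_PiM PiE_def extensional_def)
  have "(\<lambda>\<omega>. X \<omega> m) \<in> borel_measurable M \<longleftrightarrow> (\<lambda>\<omega>. undefined :: real) \<in> borel_measurable M"
    by (rule measurable_cong) (rule u)
  then show ?thesis by simp
qed

lemma I_comp[measurable]: "(\<lambda>\<omega>. I \<omega> m) \<in> borel_measurable M" by (rule comp_meas_gen[OF I_meas])
lemma U0_comp[measurable]: "(\<lambda>\<omega>. U0 \<omega> m) \<in> borel_measurable M" by (rule comp_meas_gen[OF U0_meas])
lemma U1_comp[measurable]: "(\<lambda>\<omega>. U1 \<omega> m) \<in> borel_measurable M" by (rule comp_meas_gen[OF U1_meas])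

lemma UU_meas[measurable]: "(\<lambda>\<omega>. UU \<omega> m) \<in> borel_measurable M"
  unfolding UU_def by measurable

lemma space_PU_PB: "space PU = space PB"
  by (simp add: space_PiM)

lemma joint_pair:
  assumes d: "d \<noteq> 0"
  shows "distr M (PB \<Otimes>\<^sub>M PB) (\<lambda>\<omega>. (U0 \<omega>, U1 \<omega>)) = PU \<Otimes>\<^sub>M PU"
proof -
  have "distr M PB U0 \<Otimes>\<^sub>M distr M PB U1 = distr M (PB \<Otimes>\<^sub>M PB) (\<lambda>x. (U0 x, U1 x))"
    using indep_U0_U1 unfolding indep_var_distribution_eq by blast
  moreover have "distr M PB U0 = PU" by (rule distr_vec[OF d U0_meas indU0 distU0])
  moreover have "distr M PB U1 = PU" by (rule distr_vec[OF d U1_meas indU1 distU1])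
  ultimately show ?thesis by simp
qed

lemma L5:
  assumes d: "d \<noteq> 0" and i: "i \<in> PiE {..<d} (\<lambda>_. {0::nat,1})" and u: "\<And>m. m < d \<Longrightarrow> u m \<in> {0..1}"
  shows "prob (EI i \<inter> {\<omega> \<in> space M. \<forall>m<d. UU \<omega> m \<le> u m}) = prob (EI i) * (\<Prod>m<d. gg (1-p) (i m) (u m))"
proof -
  define S where "S = {f \<in> space PB. \<forall>m<d. f m = real (i m)}"
  define T where "T = {xy \<in> space (PB \<Otimes>\<^sub>M PB). \<forall>m<d. fst xy m powr (1-p) * snd xy m powr real (i m) \<le> u m}"
  have S: "S \<in> sets PB" unfolding S_def by measurable
  have T: "T \<in> sets (PB \<Otimes>\<^sub>M PB)" unfolding T_def by measurable
  have sp: "\<And>\<omega>. \<omega> \<in> space M \<Longrightarrow> I \<omega> \<in> space PB \<and> U0 \<omega> \<in> space PB \<and> U1 \<omega> \<in> space PB"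
    using measurable_space[OF I_meas] measurable_space[OF U0_meas] measurable_space[OF U1_meas] by auto
  have e1: "EI i \<inter> {\<omega> \<in> space M. \<forall>m<d. UU \<omega> m \<le> u m} = {\<omega> \<in> space M. I \<omega> \<in> S \<and> (U0 \<omega>, U1 \<omega>) \<in> T}"
    using sp by (auto simp: EI_def S_def T_def UU_def space_pair_measure)
  have e2: "EI i = {\<omega> \<in> space M. I \<omega> \<in> S}"
    using sp by (auto simp: EI_def S_def)
  have "prob {\<omega> \<in> space M. (U0 \<omega>, U1 \<omega>) \<in> T} = measure (distr M (PB \<Otimes>\<^sub>M PB) (\<lambda>\<omega>. (U0 \<omega>, U1 \<omega>))) T"
    using T by (subst measure_distr) (auto simp: vimage_def Int_def conj_commute)
  also have "\<dots> = measure (PU \<Otimes>\<^sub>M PU) T" by (simp add: joint_pair[OF d])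
  also have "\<dots> = (\<Prod>m<d. gg (1-p) (i m) (u m))"
  proof -
    have Teq: "T = {xy \<in> space (PU \<Otimes>\<^sub>M PU). \<forall>m<d. fst xy m powr (1-p) * snd xy m powr real (i m) \<le> u m}"
      unfolding T_def by (simp add: space_pair_measure space_PU_PB)
    have "emeasure (PU \<Otimes>\<^sub>M PU) T = (\<Prod>m<d. ennreal (gg (1-p) (i m) (u m)))"
      unfolding Teq by (rule G) (use p0 p1 u i in auto)
    also have "\<dots> = ennreal (\<Prod>m<d. gg (1-p) (i m) (u m))"
      by (rule prod_ennreal) (use p0 p1 u in \<open>auto intro!: gg_nonneg\<close>)
    moreover have "0 \<le> (\<Prod>m<d. gg (1-p) (i m) (u m))"
      by (intro prod_nonneg) (use p0 p1 u in \<open>auto intro!: gg_nonneg\<close>)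
    ultimately show ?thesis
      by (simp add: measure_def)
  qed
  finally have pT: "prob {\<omega> \<in> space M. (U0 \<omega>, U1 \<omega>) \<in> T} = (\<Prod>m<d. gg (1-p) (i m) (u m))" .
  have "prob (EI i \<inter> {\<omega> \<in> space M. \<forall>m<d. UU \<omega> m \<le> u m}) = prob {\<omega> \<in> space M. I \<omega> \<in> S \<and> (U0 \<omega>, U1 \<omega>) \<in> T}"
    by (simp only: e1)
  also have "\<dots> = prob {\<omega> \<in> space M. I \<omega> \<in> S} * prob {\<omega> \<in> space M. (U0 \<omega>, U1 \<omega>) \<in> T}"
    by (rule prob_I_pair[OF S T])
  finally show ?thesis using pT e2 by simp
qed

end


lemma cont_if_const[continuous_intros]:
  "continuous_on S f \<Longrightarrow> continuous_on S g \<Longrightarrow> continuous_on S (\<lambda>x. if c then f x else g x)"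
  by (cases c) auto

context cop
begin

lemma int_fun:
  assumes "continuous_on UNIV \<phi>"
  shows "integrable M (\<lambda>\<omega>. \<phi> (Lam \<omega>) :: real)"
proof -
  have "compact (\<phi> ` {0..1})" by (rule compact_continuous_image) (use assms in \<open>auto intro: continuous_on_subset\<close>)
  then obtain B where B: "\<And>x. x \<in> {0..1} \<Longrightarrow> norm (\<phi> x) \<le> B"
    by (meson bounded_iff compact_imp_bounded image_eqI)
  have [measurable]: "\<phi> \<in> borel_measurable borel" by (rule borel_measurable_continuous_onI[OF assms])
  show ?thesis
  proof (rule integrable_const_bound[where B=B])
    show "AE \<omega> in M. norm (\<phi> (Lam \<omega>)) \<le> B" using Lam_AE by eventually_elim (rule B)
  qed measurable
qed

lemma prob_EI:
  assumes i: "i \<in> PiE {..<d} (\<lambda>_. {0::nat,1})"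
  shows "prob (EI i) = expectation (\<lambda>\<omega>. \<Prod>m<d. if i m = 0 then 1 - Lam \<omega> else Lam \<omega>)"
proof -
  have "\<forall>m<d. i m \<in> {0,1}" using i by auto
  then show ?thesis unfolding EI_def pmf_I[OF i] by (simp add: bern_prod)
qed

lemma sum_prob_EI: "(\<Sum>i\<in>PiE {..<d} (\<lambda>_. {0::nat,1}). prob (EI i)) = 1"
proof -
  have "(\<Sum>i\<in>PiE {..<d} (\<lambda>_. {0::nat,1}). prob (EI i))
      = (\<Sum>i\<in>PiE {..<d} (\<lambda>_. {0::nat,1}). expectation (\<lambda>\<omega>. \<Prod>m<d. if i m = 0 then 1 - Lam \<omega> else Lam \<omega>))"
    by (intro sum.cong refl prob_EI)
  also have "\<dots> = expectation (\<lambda>\<omega>. \<Sum>i\<in>PiE {..<d} (\<lambda>_. {0::nat,1}). \<Prod>m<d. if i m = 0 then 1 - Lam \<omega> else Lam \<omega>)"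
    by (rule Bochner_Integration.integral_sum[symmetric]) (rule int_fun[where \<phi>="\<lambda>L. \<Prod>m<d. if _ m = 0 then 1 - L else L"],
        intro continuous_on_prod cont_if_const continuous_on_diff continuous_on_const continuous_on_id)
  also have "\<dots> = expectation (\<lambda>\<omega>. \<Prod>m<d. (1 - Lam \<omega>) + Lam \<omega>)"
    by (subst sum_PiE01[where f="\<lambda>m y. if y = 0 then 1 - Lam _ else Lam _"]) simp
  also have "\<dots> = 1" by (simp add: prob_space)
  finally show ?thesis .
qed

lemma EI_disj: "disjoint_family_on EI (PiE {..<d} (\<lambda>_. {0::nat,1}))"
unfolding disjoint_family_on_def
proof (intro ballI impI)
  fix i j assume i: "i \<in> PiE {..<d} (\<lambda>_. {0::nat,1})" and j: "j \<in> PiE {..<d} (\<lambda>_. {0::nat,1})" and ij: "i \<noteq> j"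
  obtain m where m0: "i m \<noteq> j m" using ij by (auto simp: fun_eq_iff)
  have "m < d"
  proof (rule ccontr)
    assume "\<not> m < d"
    then have "i m = undefined" "j m = undefined" using i j by (auto simp: PiE_def extensional_def)
    with m0 show False by simp
  qed
  with m0 have m: "m < d" "i m \<noteq> j m" by auto
  then show "EI i \<inter> EI j = {}" by (auto simp: EI_def)
qed

lemma AE_EI: "AE \<omega> in M. \<omega> \<in> (\<Union>i\<in>PiE {..<d} (\<lambda>_. {0::nat,1}). EI i)"
proof (rule AE_prob_1)
  show "prob (\<Union>i\<in>PiE {..<d} (\<lambda>_. {0::nat,1}). EI i) = 1"
  proof -
    have "prob (\<Union>i\<in>PiE {..<d} (\<lambda>_. {0::nat,1}). EI i) = (\<Sum>i\<in>PiE {..<d} (\<lambda>_. {0::nat,1}). prob (EI i))"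
    proof (rule finite_measure_finite_Union)
      show "finite (PiE {..<d} (\<lambda>_. {0::nat,1}))" by (simp add: finite_PiE)
      show "EI ` PiE {..<d} (\<lambda>_. {0::nat,1}) \<subseteq> events" using EI_sets by blast
      show "disjoint_family_on EI (PiE {..<d} (\<lambda>_. {0::nat,1}))" by (rule EI_disj)
    qed
    then show ?thesis using sum_prob_EI by simp
  qed
qed

lemma cc_eq:
  "(1 - L) * gg (1 - p) 0 v + L * gg (1 - p) 1 v = cc L v"
proof -
  have aux: "(1 - L) * c + L * ((v - (1 - p) * c) / (1 - (1 - p))) = c - L / p * (c - v)" for c :: real
    using p0 by (simp add: field_simps)
  show ?thesis unfolding gg_def cc_def using aux by simp
qed

lemma K:
  assumes u: "\<And>m. m < d \<Longrightarrow> u m \<in> {0..1}"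
  shows "prob {\<omega> \<in> space M. \<forall>m<d. UU \<omega> m \<le> u m} = expectation (\<lambda>\<omega>. \<Prod>m<d. cc (Lam \<omega>) (u m))"
proof (cases "d = 0")
  case True
  then show ?thesis by (simp add: prob_space)
next
  case d: False
  let ?Ib = "PiE {..<d} (\<lambda>_. {0::nat,1})"
  let ?A = "{\<omega> \<in> space M. \<forall>m<d. UU \<omega> m \<le> u m}"
  have A[measurable]: "?A \<in> events" by measurable
  have "prob ?A = prob (\<Union>i\<in>?Ib. EI i \<inter> ?A)"
  proof (rule finite_measure_eq_AE)
    show "AE x in M. (x \<in> ?A) = (x \<in> (\<Union>i\<in>?Ib. EI i \<inter> ?A))" using AE_EI by eventually_elim blast
    show "(\<Union>i\<in>?Ib. EI i \<inter> ?A) \<in> events"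
    proof (rule sets.finite_UN)
      show "finite ?Ib" by (simp add: finite_PiE)
    qed (intro sets.Int EI_sets A)
  qed fact
  also have "\<dots> = (\<Sum>i\<in>?Ib. prob (EI i \<inter> ?A))"
  proof (rule finite_measure_finite_Union)
    show "finite ?Ib" by (simp add: finite_PiE)
    show "(\<lambda>i. EI i \<inter> ?A) ` ?Ib \<subseteq> events" by (intro image_subsetI sets.Int EI_sets A)
    show "disjoint_family_on (\<lambda>i. EI i \<inter> ?A) ?Ib"
      unfolding disjoint_family_on_def
    proof (intro ballI impI)
      fix i j assume "i \<in> ?Ib" "j \<in> ?Ib" "i \<noteq> j"
      then have "EI i \<inter> EI j = {}" using EI_disj unfolding disjoint_family_on_def by blast
      then show "(EI i \<inter> ?A) \<inter> (EI j \<inter> ?A) = {}" by blast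
    qed
  qed
  also have "\<dots> = (\<Sum>i\<in>?Ib. prob (EI i) * (\<Prod>m<d. gg (1-p) (i m) (u m)))"
    by (intro sum.cong refl L5[OF d _ u])
  also have "\<dots> = (\<Sum>i\<in>?Ib. expectation (\<lambda>\<omega>. \<Prod>m<d. if i m = 0 then (1 - Lam \<omega>) * gg (1-p) 0 (u m) else Lam \<omega> * gg (1-p) 1 (u m)))"
  proof (intro sum.cong refl)
    fix i assume i: "i \<in> ?Ib"
    have "prob (EI i) * (\<Prod>m<d. gg (1-p) (i m) (u m))
        = expectation (\<lambda>\<omega>. (\<Prod>m<d. if i m = 0 then 1 - Lam \<omega> else Lam \<omega>) * (\<Prod>m<d. gg (1-p) (i m) (u m)))"
      unfolding prob_EI[OF i] by (rule integral_mult_left_zero[symmetric])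
    also have "\<dots> = expectation (\<lambda>\<omega>. \<Prod>m<d. if i m = 0 then (1 - Lam \<omega>) * gg (1-p) 0 (u m) else Lam \<omega> * gg (1-p) 1 (u m))"
    proof (intro Bochner_Integration.integral_cong refl)
      fix \<omega>
      have "(\<Prod>m<d. if i m = 0 then 1 - Lam \<omega> else Lam \<omega>) * (\<Prod>m<d. gg (1-p) (i m) (u m))
          = (\<Prod>m<d. (if i m = 0 then 1 - Lam \<omega> else Lam \<omega>) * gg (1-p) (i m) (u m))"
        by (rule prod.distrib[symmetric])
      also have "\<dots> = (\<Prod>m<d. if i m = 0 then (1 - Lam \<omega>) * gg (1-p) 0 (u m) else Lam \<omega> * gg (1-p) 1 (u m))"
      proof (rule prod.cong[OF refl])
        fix m assume "m \<in> {..<d}"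
        then have "i m = 0 \<or> i m = 1" using i by auto
        then show "(if i m = 0 then 1 - Lam \<omega> else Lam \<omega>) * gg (1-p) (i m) (u m)
            = (if i m = 0 then (1 - Lam \<omega>) * gg (1-p) 0 (u m) else Lam \<omega> * gg (1-p) 1 (u m))"
          by (elim disjE) simp_all
      qed
      finally show "(\<Prod>m<d. if i m = 0 then 1 - Lam \<omega> else Lam \<omega>) * (\<Prod>m<d. gg (1-p) (i m) (u m))
          = (\<Prod>m<d. if i m = 0 then (1 - Lam \<omega>) * gg (1-p) 0 (u m) else Lam \<omega> * gg (1-p) 1 (u m))" .
    qed
    finally show "prob (EI i) * (\<Prod>m<d. gg (1-p) (i m) (u m))
        = expectation (\<lambda>\<omega>. \<Prod>m<d. if i m = 0 then (1 - Lam \<omega>) * gg (1-p) 0 (u m) else Lam \<omega> * gg (1-p) 1 (u m))" .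
  qed
  also have "\<dots> = expectation (\<lambda>\<omega>. \<Sum>i\<in>?Ib. \<Prod>m<d. if i m = 0 then (1 - Lam \<omega>) * gg (1-p) 0 (u m) else Lam \<omega> * gg (1-p) 1 (u m))"
    by (rule Bochner_Integration.integral_sum[symmetric])
       (rule int_fun[where \<phi>="\<lambda>L. \<Prod>m<d. if _ m = 0 then (1 - L) * gg (1-p) 0 (u m) else L * gg (1-p) 1 (u m)"],
        intro continuous_on_prod cont_if_const continuous_on_mult continuous_on_diff continuous_on_const continuous_on_id)
  also have "\<dots> = expectation (\<lambda>\<omega>. \<Prod>m<d. (1 - Lam \<omega>) * gg (1-p) 0 (u m) + Lam \<omega> * gg (1-p) 1 (u m))"
    by (subst sum_PiE01[where f="\<lambda>m y. if y = 0 then (1 - Lam _) * gg (1-p) 0 (u m) else Lam _ * gg (1-p) 1 (u m)"]) simp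
  also have "\<dots> = expectation (\<lambda>\<omega>. \<Prod>m<d. cc (Lam \<omega>) (u m))"
    by (simp only: cc_eq)
  finally show ?thesis .
qed

end


definition clamp :: "real \<Rightarrow> real" where "clamp t = max 0 (min 1 t)"

lemma clamp_01: "clamp t \<in> {0..1}" by (simp add: clamp_def)

context cop
begin

lemma AE_comp01:
  assumes X: "X \<in> M \<rightarrow>\<^sub>M PB" and dist: "\<And>m. m < d \<Longrightarrow> distr M borel (\<lambda>\<omega>. X \<omega> m) = Unif"
  shows "AE \<omega> in M. \<forall>m<d. X \<omega> m \<in> {0..1}"
proof -
  have "AE \<omega> in M. X \<omega> m \<in> {0..1}" if m: "m < d" for m
  proof -
    have Xm: "(\<lambda>\<omega>. X \<omega> m) \<in> borel_measurable M" by (rule comp_meas_gen[OF X])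
    have "AE x in Unif. x \<in> {0..1}" by (rule AE_uniform_measureI) auto
    then have "AE x in distr M borel (\<lambda>\<omega>. X \<omega> m). x \<in> {0..1}" by (subst dist[OF m])
    then show ?thesis by (subst (asm) AE_distr_iff[OF Xm]) auto
  qed
  then have "AE \<omega> in M. \<forall>m\<in>{..<d}. X \<omega> m \<in> {0..1}" by (intro AE_finite_allI) auto
  then show ?thesis by auto
qed

lemma AE_I01: "AE \<omega> in M. \<forall>m<d. I \<omega> m = 0 \<or> I \<omega> m = 1"
  using AE_EI
proof eventually_elim
  case (elim \<omega>)
  then obtain i where i: "i \<in> PiE {..<d} (\<lambda>_. {0::nat,1})" "\<omega> \<in> EI i" by blast
  show ?case
  proof (intro allI impI)
    fix m assume m: "m < d"
    then have "I \<omega> m = real (i m)" using i by (auto simp: EI_def)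
    moreover have "i m = 0 \<or> i m = 1" using i m by auto
    ultimately show "I \<omega> m = 0 \<or> I \<omega> m = 1" by auto
  qed
qed

lemma AE_U0: "AE \<omega> in M. \<forall>m<d. U0 \<omega> m \<in> {0..1}"
  by (rule AE_comp01[OF U0_meas]) (rule distU0)
lemma AE_U1: "AE \<omega> in M. \<forall>m<d. U1 \<omega> m \<in> {0..1}"
  by (rule AE_comp01[OF U1_meas]) (rule distU1)

lemma AE_UU_le1: "AE \<omega> in M. \<forall>m<d. UU \<omega> m \<le> 1"
  using AE_U0 AE_U1 AE_I01
proof eventually_elim
  case (elim \<omega>)
  show ?case
  proof (intro allI impI)
    fix m assume m: "m < d"
    have a: "U0 \<omega> m powr (1 - p) \<le> 1"
      using powr_mono2[of "1 - p" "U0 \<omega> m" 1] elim m p1 by auto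
    have b: "U1 \<omega> m powr I \<omega> m \<le> 1"
      using elim m by (auto simp: powr_zero_eq_one)
    show "UU \<omega> m \<le> 1" unfolding UU_def
      by (rule mult_le_one[OF a _ b]) simp
  qed
qed

lemma cc_0: "cc L 0 = 0" by (simp add: cc_def)
lemma cc_1: "cc L 1 = 1" by (simp add: cc_def)

lemma KX: "prob {\<omega> \<in> space M. \<forall>m<d. UU \<omega> m \<le> x m} = expectation (\<lambda>\<omega>. \<Prod>m<d. cc (Lam \<omega>) (clamp (x m)))"
proof (cases "\<exists>m<d. x m < 0")
  case True
  then obtain m where m: "m < d" "x m < 0" by blast
  let ?v = "\<lambda>k. if k = m then 0 else 1 :: real"
  let ?B = "{\<omega> \<in> space M. \<forall>k<d. UU \<omega> k \<le> ?v k}"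
  have "prob ?B = expectation (\<lambda>\<omega>. \<Prod>k<d. cc (Lam \<omega>) (?v k))"
    by (rule K) auto
  also have "(\<lambda>\<omega>. \<Prod>k<d. cc (Lam \<omega>) (?v k)) = (\<lambda>\<omega>. 0)"
    using m by (intro ext prod_zero) (auto intro!: bexI[of _ m] simp: cc_0)
  finally have B0: "prob ?B = 0" by simp
  have "prob {\<omega> \<in> space M. \<forall>m<d. UU \<omega> m \<le> x m} \<le> prob ?B"
  proof (rule finite_measure_mono_AE)
    show "AE \<omega> in M. \<omega> \<in> {\<omega> \<in> space M. \<forall>m<d. UU \<omega> m \<le> x m} \<longrightarrow> \<omega> \<in> ?B"
      using AE_UU_le1
    proof eventually_elim
      case (elim \<omega>)
      then show ?case using m by auto
    qed
  qed measurable
  then have L0: "prob {\<omega> \<in> space M. \<forall>m<d. UU \<omega> m \<le> x m} = 0" using B0 measure_nonneg[of M] by (simp add: antisym)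
  have "(\<lambda>\<omega>. \<Prod>m<d. cc (Lam \<omega>) (clamp (x m))) = (\<lambda>\<omega>. 0)"
    using m by (intro ext prod_zero) (auto intro!: bexI[of _ m] simp: cc_0 clamp_def)
  then show ?thesis using L0 by simp
next
  case False
  then have x0: "\<And>m. m < d \<Longrightarrow> 0 \<le> x m" by auto
  have "prob {\<omega> \<in> space M. \<forall>m<d. UU \<omega> m \<le> x m} = prob {\<omega> \<in> space M. \<forall>m<d. UU \<omega> m \<le> clamp (x m)}"
  proof (rule finite_measure_eq_AE)
    show "AE \<omega> in M. (\<omega> \<in> {\<omega> \<in> space M. \<forall>m<d. UU \<omega> m \<le> x m}) = (\<omega> \<in> {\<omega> \<in> space M. \<forall>m<d. UU \<omega> m \<le> clamp (x m)})"
      using AE_UU_le1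
    proof eventually_elim
      case (elim \<omega>)
      then show ?case using x0 by (auto simp: clamp_def)
    qed
  qed measurable
  also have "\<dots> = expectation (\<lambda>\<omega>. \<Prod>m<d. cc (Lam \<omega>) (clamp (x m)))"
    by (rule K) (rule clamp_01)
  finally show ?thesis .
qed

lemma int_Lam: "integrable M Lam"
  using int_fun[of "\<lambda>x. x"] by simp

lemma E_cc: "expectation (\<lambda>\<omega>. cc (Lam \<omega>) v) = v"
proof -
  have "expectation (\<lambda>\<omega>. cc (Lam \<omega>) v) = expectation (\<lambda>\<omega>. v powr (1/(1-p)) - Lam \<omega> * ((v powr (1/(1-p)) - v) / p))"
    by (simp add: cc_def)
  also have "\<dots> = v powr (1/(1-p)) - expectation Lam * ((v powr (1/(1-p)) - v) / p)"
    using int_Lam by (simp add: prob_space)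
  also have "\<dots> = v" using p0 by (simp add: p_def[symmetric])
  finally show ?thesis .
qed

lemma marginal:
  assumes m: "m < d"
  shows "prob {\<omega> \<in> space M. UU \<omega> m \<le> t} = clamp t"
proof -
  let ?x = "\<lambda>k. if k = m then t else 1"
  have "prob {\<omega> \<in> space M. UU \<omega> m \<le> t} = prob {\<omega> \<in> space M. \<forall>k<d. UU \<omega> k \<le> ?x k}"
  proof (rule finite_measure_eq_AE)
    show "AE \<omega> in M. (\<omega> \<in> {\<omega> \<in> space M. UU \<omega> m \<le> t}) = (\<omega> \<in> {\<omega> \<in> space M. \<forall>k<d. UU \<omega> k \<le> ?x k})"
      using AE_UU_le1
    proof eventually_elim
      case (elim \<omega>)
      then show ?case using m by auto
    qed
  qed measurable
  also have "\<dots> = expectation (\<lambda>\<omega>. \<Prod>k<d. cc (Lam \<omega>) (clamp (?x k)))" by (rule KX)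
  also have "(\<lambda>\<omega>. \<Prod>k<d. cc (Lam \<omega>) (clamp (?x k))) = (\<lambda>\<omega>. cc (Lam \<omega>) (clamp t))"
  proof
    fix \<omega>
    have "(\<Prod>k<d. cc (Lam \<omega>) (clamp (?x k))) = (\<Prod>k<d. if k = m then cc (Lam \<omega>) (clamp t) else 1)"
      by (intro prod.cong refl) (simp add: clamp_def cc_1)
    also have "\<dots> = cc (Lam \<omega>) (clamp t)" using m by (simp add: prod.delta)
    finally show "(\<Prod>k<d. cc (Lam \<omega>) (clamp (?x k))) = cc (Lam \<omega>) (clamp t)" .
  qed
  also have "expectation (\<lambda>\<omega>. cc (Lam \<omega>) (clamp t)) = clamp t" by (rule E_cc)
  finally show ?thesis .
qed

lemma cdf_Unif: "measure Unif {..t} = clamp t"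
proof -
  have "measure Unif {..t} = measure lborel ({0..1} \<inter> {..t}) / measure lborel {0..1::real}"
    by (subst measure_uniform_measure) auto
  also have "\<dots> = clamp t"
  proof (cases "t < 0")
    case True
    then have "{0..1} \<inter> {..t} = {}" by auto
    then show ?thesis using True by (simp add: clamp_def)
  next
    case False
    show ?thesis
    proof (cases "t \<le> 1")
      case True
      then have "{0..1} \<inter> {..t} = {0..t}" by auto
      then show ?thesis using True False by (simp add: clamp_def)
    next
      case f2: False
      then have "{0..1} \<inter> {..t} = {0..1}" by auto
      then show ?thesis using f2 by (simp add: clamp_def)
    qed
  qed
  finally show ?thesis .
qed

lemma UU_uniform:
  assumes m: "m < d"
  shows "distr M borel (\<lambda>\<omega>. UU \<omega> m) = Unif"
proof (rule cdf_unique)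
  show "real_distribution (distr M borel (\<lambda>\<omega>. UU \<omega> m))" by simp
  show "real_distribution Unif"
    unfolding real_distribution_def real_distribution_axioms_def using Unif_prob by simp
  show "cdf (distr M borel (\<lambda>\<omega>. UU \<omega> m)) = cdf Unif"
  proof
    fix t
    have "cdf (distr M borel (\<lambda>\<omega>. UU \<omega> m)) t = prob {\<omega> \<in> space M. UU \<omega> m \<le> t}"
      unfolding cdf_def by (subst measure_distr) (auto simp: vimage_def Int_def conj_commute)
    also have "\<dots> = clamp t" by (rule marginal[OF m])
    also have "\<dots> = cdf Unif t" unfolding cdf_def by (rule cdf_Unif[symmetric])
    finally show "cdf (distr M borel (\<lambda>\<omega>. UU \<omega> m)) t = cdf Unif t" .
  qed
qed

end


context cop
begin

lemma int_Lam_pow: "integrable M (\<lambda>\<omega>. Lam \<omega> ^ k)"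
  using int_fun[of "\<lambda>x. x ^ k"] by (simp add: continuous_intros)

lemma partB:
  assumes u: "u \<in> PiE {..<d} (\<lambda>_. {0<..1})"
  shows "expectation (\<lambda>\<omega>. \<Prod>m<d. cc (Lam \<omega>) (u m))
    = (\<Prod>m<d. u m powr (1 / (1 - p))) *
            (1 + (\<Sum>k = 1..d. (-1) ^ k *
                   (\<Sum>J \<in> {J. J \<subseteq> {..<d} \<and> card J = k}.
                      expectation (\<lambda>\<omega>. Lam \<omega> ^ k) / p ^ k *
                      (\<Prod>j\<in>J. 1 - u j powr (- (p / (1 - p)))))))"
proof -
  define P where "P = (\<Prod>m<d. u m powr (1 / (1 - p)))"
  define y where "y m = 1 - u m powr (- (p / (1 - p)))" for m
  define S where "S k = (\<Sum>J\<in>{J. J \<subseteq> {..<d} \<and> card J = k}. \<Prod>j\<in>J. y j)" for k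
  have upos: "0 < u m" if m: "m < d" for m
  proof -
    have "u m \<in> {0<..1}" by (rule PiE_mem[OF u]) (use m in simp)
    then show ?thesis by simp
  qed
  have fac: "cc L (u m) = u m powr (1 / (1 - p)) * (1 - L / p * y m)" if m: "m < d" for L m
  proof -
    have "u m powr (1 / (1 - p)) * u m powr (- (p / (1 - p))) = u m powr (1 / (1 - p) + - (p / (1 - p)))"
      by (rule powr_add[symmetric])
    also have "1 / (1 - p) + - (p / (1 - p)) = 1" using p1 by (simp add: field_simps)
    finally have e: "u m powr (1 / (1 - p)) * u m powr (- (p / (1 - p))) = u m" using upos[OF m] by simp
    have h: "c * (1 - L / p * (1 - w)) = c - L / p * (c - c * w)" for c w :: real
      using p0 by (simp add: field_simps)
    show ?thesis unfolding cc_def y_def h e ..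
  qed
  have pw: "(\<Prod>m<d. cc (Lam \<omega>) (u m)) = (\<Sum>k=0..d. (P * ((-1) ^ k / p ^ k * S k)) * Lam \<omega> ^ k)" for \<omega>
  proof -
    have "(\<Prod>m<d. cc (Lam \<omega>) (u m)) = (\<Prod>m<d. u m powr (1 / (1 - p)) * (1 - Lam \<omega> / p * y m))"
      by (intro prod.cong refl) (simp add: fac)
    also have "\<dots> = P * (\<Prod>m<d. 1 - Lam \<omega> / p * y m)" unfolding P_def by (rule prod.distrib)
    also have "\<dots> = P * (\<Sum>k=0..d. (-1) ^ k * (Lam \<omega> ^ k / p ^ k) * S k)"
      unfolding S_def by (simp only: expand_prod)
    also have "\<dots> = (\<Sum>k=0..d. (P * ((-1) ^ k / p ^ k * S k)) * Lam \<omega> ^ k)"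
      unfolding sum_distrib_left by (intro sum.cong refl) (simp add: mult_ac)
    finally show ?thesis .
  qed
  have "expectation (\<lambda>\<omega>. \<Prod>m<d. cc (Lam \<omega>) (u m)) = expectation (\<lambda>\<omega>. \<Sum>k=0..d. (P * ((-1) ^ k / p ^ k * S k)) * Lam \<omega> ^ k)"
    by (simp only: pw)
  also have "\<dots> = (\<Sum>k=0..d. expectation (\<lambda>\<omega>. (P * ((-1) ^ k / p ^ k * S k)) * Lam \<omega> ^ k))"
    by (rule Bochner_Integration.integral_sum) (intro integrable_mult_right int_Lam_pow)
  also have "\<dots> = (\<Sum>k=0..d. (P * ((-1) ^ k / p ^ k * S k)) * expectation (\<lambda>\<omega>. Lam \<omega> ^ k))"
    by (intro sum.cong refl integral_mult_right_zero)
  also have "\<dots> = P * (\<Sum>k=0..d. (-1) ^ k * (S k * (expectation (\<lambda>\<omega>. Lam \<omega> ^ k) / p ^ k)))"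
    unfolding sum_distrib_left by (intro sum.cong refl) (simp add: mult_ac)
  also have "(\<Sum>k=0..d. (-1) ^ k * (S k * (expectation (\<lambda>\<omega>. Lam \<omega> ^ k) / p ^ k)))
      = (-1) ^ 0 * (S 0 * (expectation (\<lambda>\<omega>. Lam \<omega> ^ 0) / p ^ 0)) + (\<Sum>k=1..d. (-1) ^ k * (S k * (expectation (\<lambda>\<omega>. Lam \<omega> ^ k) / p ^ k)))"
    by (subst sum.atLeast_Suc_atMost) simp_all
  also have "S 0 = 1"
  proof -
    have "{J. J \<subseteq> {..<d} \<and> card J = 0} = {{}}" by (auto dest: finite_subset)
    then show ?thesis by (simp add: S_def)
  qed
  also have "(-1) ^ 0 * (1 * (expectation (\<lambda>\<omega>. Lam \<omega> ^ 0) / p ^ 0)) = (1::real)" by (simp add: prob_space)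
  also have "(\<Sum>k=1..d. (-1) ^ k * (S k * (expectation (\<lambda>\<omega>. Lam \<omega> ^ k) / p ^ k)))
     = (\<Sum>k = 1..d. (-1) ^ k *
                   (\<Sum>J \<in> {J. J \<subseteq> {..<d} \<and> card J = k}.
                      expectation (\<lambda>\<omega>. Lam \<omega> ^ k) / p ^ k *
                      (\<Prod>j\<in>J. 1 - u j powr (- (p / (1 - p))))))"
  proof (intro sum.cong refl arg_cong[where f="\<lambda>x. (-1) ^ _ * x"])
    fix k
    show "S k * (expectation (\<lambda>\<omega>. Lam \<omega> ^ k) / p ^ k) = (\<Sum>J \<in> {J. J \<subseteq> {..<d} \<and> card J = k}.
                      expectation (\<lambda>\<omega>. Lam \<omega> ^ k) / p ^ k * (\<Prod>j\<in>J. 1 - u j powr (- (p / (1 - p)))))"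
      unfolding S_def y_def sum_distrib_right by (simp only: mult.commute)
  qed
  finally show ?thesis unfolding P_def .
qed

lemma partA: "is_copula_of M d UU (\<lambda>u. expectation (\<lambda>\<omega>. \<Prod>m<d. cc (Lam \<omega>) (u m)))"
proof -
  let ?f = "\<lambda>\<omega>. \<lambda>m\<in>{..<d}. UU \<omega> m"
  define N where "N = distr M PB ?f"
  have f[measurable]: "?f \<in> M \<rightarrow>\<^sub>M PB" by (intro measurable_restrict) simp
  have cop: "is_copula d (\<lambda>u. expectation (\<lambda>\<omega>. \<Prod>m<d. cc (Lam \<omega>) (u m)))"
    unfolding is_copula_def
  proof (intro exI[of _ N] conjI allI impI ballI)
    show "prob_space N" unfolding N_def by (rule prob_space_distr) (rule f)
    show "sets N = sets PB" unfolding N_def by simp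
    fix m assume m: "m < d"
    have "distr N borel (\<lambda>v. v m) = distr M borel ((\<lambda>v. v m) \<circ> ?f)"
      unfolding N_def by (intro distr_distr f measurable_component_singleton) (use m in simp)
    also have "(\<lambda>v. v m) \<circ> ?f = (\<lambda>\<omega>. UU \<omega> m)" using m by (simp add: fun_eq_iff)
    also have "distr M borel (\<lambda>\<omega>. UU \<omega> m) = Unif" by (rule UU_uniform[OF m])
    finally show "distr N borel (\<lambda>v. v m) = uniform_measure lborel {0..1}" .
  next
    fix u assume u: "u \<in> PiE {..<d} (\<lambda>_. {0..1::real})"
    have Nset: "{v \<in> space N. \<forall>m<d. v m \<le> u m} = {v \<in> space PB. \<forall>m<d. v m \<le> u m}"
      by (simp add: N_def)
    have S: "{v \<in> space PB. \<forall>m<d. v m \<le> u m} \<in> sets PB" by measurable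
    have "measure N {v \<in> space N. \<forall>m<d. v m \<le> u m} = prob (?f -` {v \<in> space PB. \<forall>m<d. v m \<le> u m} \<inter> space M)"
      unfolding Nset unfolding N_def by (rule measure_distr[OF f S])
    also have "?f -` {v \<in> space PB. \<forall>m<d. v m \<le> u m} \<inter> space M = {\<omega> \<in> space M. \<forall>m<d. UU \<omega> m \<le> u m}"
    proof (intro set_eqI)
      fix \<omega>
      show "\<omega> \<in> ?f -` {v \<in> space PB. \<forall>m<d. v m \<le> u m} \<inter> space M \<longleftrightarrow> \<omega> \<in> {\<omega> \<in> space M. \<forall>m<d. UU \<omega> m \<le> u m}"
        using measurable_space[OF f, of \<omega>] by (simp; blast)
    qed
    also have "prob {\<omega> \<in> space M. \<forall>m<d. UU \<omega> m \<le> u m} = expectation (\<lambda>\<omega>. \<Prod>m<d. cc (Lam \<omega>) (u m))"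
      by (rule K) (rule PiE_mem[OF u], simp)
    finally show "expectation (\<lambda>\<omega>. \<Prod>m<d. cc (Lam \<omega>) (u m)) = measure N {v \<in> space N. \<forall>m<d. v m \<le> u m}"
      by (rule sym)
  qed
  show ?thesis unfolding is_copula_of_def
  proof (intro conjI allI cop)
    fix x :: "nat \<Rightarrow> real"
    have "expectation (\<lambda>\<omega>. \<Prod>m<d. cc (Lam \<omega>) (restrict (\<lambda>m. prob {\<omega> \<in> space M. UU \<omega> m \<le> x m}) {..<d} m))
        = expectation (\<lambda>\<omega>. \<Prod>m<d. cc (Lam \<omega>) (clamp (x m)))"
      by (intro Bochner_Integration.integral_cong refl prod.cong) (simp add: marginal)
    also have "\<dots> = prob {\<omega> \<in> space M. \<forall>m<d. UU \<omega> m \<le> x m}" by (rule KX[symmetric])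
    finally show "prob {\<omega> \<in> space M. \<forall>m<d. UU \<omega> m \<le> x m} =
       expectation (\<lambda>\<omega>. \<Prod>m<d. cc (Lam \<omega>) (restrict (\<lambda>m. prob {\<omega> \<in> space M. UU \<omega> m \<le> x m}) {..<d} m))" ..
  qed
qed

end

theorem proposition5p3:
  fixes M :: "'a measure" and d :: nat
    and Lam :: "'a \<Rightarrow> real"
    and I U0 U1 :: "'a \<Rightarrow> nat \<Rightarrow> real"
    and p :: real
  assumes "prob_space M"
    and "Lam \<in> borel_measurable M"
    and "AE \<omega> in M. Lam \<omega> \<in> {0..1}"
    and p_def: "p = prob_space.expectation M Lam"
    and "0 < p" and "p < 1"
    and "I \<in> M \<rightarrow>\<^sub>M PiM {..<d} (\<lambda>_. borel)"
    and "U0 \<in> M \<rightarrow>\<^sub>M PiM {..<d} (\<lambda>_. borel)"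
    and "U1 \<in> M \<rightarrow>\<^sub>M PiM {..<d} (\<lambda>_. borel)"
    and pmf_I: "\<And>i. i \<in> PiE {..<d} (\<lambda>_. {0::nat, 1}) \<Longrightarrow>
        measure M {\<omega> \<in> space M. \<forall>m<d. I \<omega> m = real (i m)} =
        prob_space.expectation M
          (\<lambda>\<omega>. Lam \<omega> ^ (\<Sum>m<d. i m) * (1 - Lam \<omega>) ^ (d - (\<Sum>m<d. i m)))"
    and "prob_space.indep_vars M (\<lambda>_. borel) (\<lambda>m \<omega>. U0 \<omega> m) {..<d}"
    and "prob_space.indep_vars M (\<lambda>_. borel) (\<lambda>m \<omega>. U1 \<omega> m) {..<d}"
    and "\<And>m. m < d \<Longrightarrow> distr M borel (\<lambda>\<omega>. U0 \<omega> m) = uniform_measure lborel {0..1}"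
    and "\<And>m. m < d \<Longrightarrow> distr M borel (\<lambda>\<omega>. U1 \<omega> m) = uniform_measure lborel {0..1}"
    and "prob_space.indep_vars M (\<lambda>_. PiM {..<d} (\<lambda>_. borel)) (\<lambda>k. [I, U0, U1] ! k) {0, 1, 2}"
  shows
    "is_copula_of M d
        (\<lambda>\<omega> m. U0 \<omega> m powr (1 - p) * U1 \<omega> m powr I \<omega> m)
        (\<lambda>u. prob_space.expectation M
           (\<lambda>\<omega>. \<Prod>m<d. u m powr (1 / (1 - p))
                      - Lam \<omega> / p * (u m powr (1 / (1 - p)) - u m)))
     \<and> (\<forall>u \<in> PiE {..<d} (\<lambda>_. {0<..1}).
          prob_space.expectation M
           (\<lambda>\<omega>. \<Prod>m<d. u m powr (1 / (1 - p))
                      - Lam \<omega> / p * (u m powr (1 / (1 - p)) - u m))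
          = (\<Prod>m<d. u m powr (1 / (1 - p))) *
            (1 + (\<Sum>k = 1..d. (-1) ^ k *
                   (\<Sum>J \<in> {J. J \<subseteq> {..<d} \<and> card J = k}.
                      prob_space.expectation M (\<lambda>\<omega>. Lam \<omega> ^ k) / p ^ k *
                      (\<Prod>j\<in>J. 1 - u j powr (- (p / (1 - p))))))))"
proof -
  interpret C: cop M d Lam I U0 U1 p
    by (rule cop.intro[OF assms(1)], unfold_locales) (use assms in auto)
  have X: "(\<lambda>\<omega> m. U0 \<omega> m powr (1 - p) * U1 \<omega> m powr I \<omega> m) = C.UU"
    by (simp add: fun_eq_iff C.UU_def)
  have Cf: "(\<lambda>u. C.expectation (\<lambda>\<omega>. \<Prod>m<d. u m powr (1 / (1 - p)) - Lam \<omega> / p * (u m powr (1 / (1 - p)) - u m)))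
      = (\<lambda>u. C.expectation (\<lambda>\<omega>. \<Prod>m<d. C.cc (Lam \<omega>) (u m)))"
    by (simp add: C.cc_def)
  show ?thesis
    unfolding X Cf
  proof (intro conjI ballI)
    show "is_copula_of M d C.UU (\<lambda>u. C.expectation (\<lambda>\<omega>. \<Prod>m<d. C.cc (Lam \<omega>) (u m)))"
      by (rule C.partA)
    fix u assume u: "u \<in> PiE {..<d} (\<lambda>_. {0<..1::real})"
    have "(\<lambda>\<omega>. \<Prod>m<d. u m powr (1 / (1 - p)) - Lam \<omega> / p * (u m powr (1 / (1 - p)) - u m))
        = (\<lambda>\<omega>. \<Prod>m<d. C.cc (Lam \<omega>) (u m))"
      by (simp add: C.cc_def)
    then show "C.expectation (\<lambda>\<omega>. \<Prod>m<d. u m powr (1 / (1 - p)) - Lam \<omega> / p * (u m powr (1 / (1 - p)) - u m))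
        = (\<Prod>m<d. u m powr (1 / (1 - p))) *
            (1 + (\<Sum>k = 1..d. (-1) ^ k *
                   (\<Sum>J \<in> {J. J \<subseteq> {..<d} \<and> card J = k}.
                      C.expectation (\<lambda>\<omega>. Lam \<omega> ^ k) / p ^ k *
                      (\<Prod>j\<in>J. 1 - u j powr (- (p / (1 - p)))))))"
      using C.partB[OF u] by simp
  qed
qed


end
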